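(* Let $a,b,c$ be symbols of rank $0$, $1$ and $2$, respectively. There is a family of trees $(t_n)_{n\ge1}$ with all labels in $\{a,b,c\}$ and a constant $C>0$ such that: $|t_n|\in\Theta(n)$; for every $n$ and every subtree $s$ of $t_n$ (rooted at any node), the depth of $s$ is at most $C\log_2(|s|+1)$; and the minimal dag of $t_n$ has $\Omega\big(\frac{n\log\log n}{\log n}\big)$ nodes.
   Context: Trees are finite rooted ordered trees whose nodes are labelled by ranked symbols, a node labelled by a symbol of rank $k$ having exactly $k$ ordered children; $|t|$ is the number of nodes and the depth is the maximal number of edges on a root-to-leaf path. The minimal dag of a tree has one node for each isomorphism class (as labelled ordered trees) of subtrees; its size is its number of nodes. *)

theory Defs
  imports Complex_Main "HOL-Library.Landau_Symbols"
begin

text \<open>Ranked trees over the alphabet {a,b,c} with rank a = 0, rank b = 1, rank c = 2.\<close>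
datatype rtree = La | Lb rtree | Lc rtree rtree

fun tsize :: "rtree \<Rightarrow> nat" where
  "tsize La = 1"
| "tsize (Lb t) = tsize t + 1"
| "tsize (Lc t u) = tsize t + tsize u + 1"

fun depth :: "rtree \<Rightarrow> nat" where
  "depth La = 0"
| "depth (Lb t) = depth t + 1"
| "depth (Lc t u) = max (depth t) (depth u) + 1"

text \<open>The set of subtrees (rooted at any node, including the tree itself).
  Trees are identified up to equality of terms, i.e. up to isomorphism of
  labelled ordered trees.\<close>
fun subtrees :: "rtree \<Rightarrow> rtree set" where
  "subtrees La = {La}"
| "subtrees (Lb t) = insert (Lb t) (subtrees t)"
| "subtrees (Lc t u) = insert (Lc t u) (subtrees t \<union> subtrees u)"

text \<open>Size of the minimal dag: number of isomorphism classes of subtrees.\<close>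
definition dag_size :: "rtree \<Rightarrow> nat" where
  "dag_size t = card (subtrees t)"

end

theory Submission imports Defs "HOL-Library.Discrete_Functions" "HOL-Real_Asymp.Real_Asymp" begin

definition bitleaf :: "bool \<Rightarrow> rtree" where
  "bitleaf b = (if b then Lb (Lb La) else Lc La La)"

fun enc :: "nat \<Rightarrow> (nat \<Rightarrow> bool) \<Rightarrow> nat \<Rightarrow> rtree" where
  "enc 0 f off = bitleaf (f off)"
| "enc (Suc d) f off = Lc (enc d f off) (enc d f (off + 2^d))"

fun chain :: "nat \<Rightarrow> rtree \<Rightarrow> rtree" where
  "chain 0 t = t"
| "chain (Suc j) t = Lb (chain j t)"

definition leafg :: "nat \<Rightarrow> nat \<Rightarrow> rtree" where
  "leafg d i = chain d (enc d (\<lambda>k. bit i k) 0)"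

fun skel :: "nat \<Rightarrow> nat \<Rightarrow> nat \<Rightarrow> rtree" where
  "skel d 0 off = leafg d off"
| "skel d (Suc H) off = Lc (skel d H off) (skel d H (off + 2^H))"

definition P :: "rtree \<Rightarrow> bool" where
  "P s \<longleftrightarrow> (\<exists>e. 2^e \<le> tsize s + 1 \<and> depth s \<le> 2*e)"

lemma self_sub: "t \<in> subtrees t"
  by (cases t) auto

lemma sub_trans: "s \<in> subtrees t \<Longrightarrow> subtrees s \<subseteq> subtrees t"
  by (induction t) auto

lemma fin_sub: "finite (subtrees t)"
  by (induction t) auto

lemma tsize_enc1: "tsize (enc d f off) + 1 = 2^(d+2)"
proof (induction d arbitrary: off)
  case 0 then show ?case by (simp add: bitleaf_def)
next
  case (Suc d)
  have a: "tsize (enc d f off) + 1 = 2^(d+2)" by (rule Suc)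
  have b: "tsize (enc d f (off + 2^d)) + 1 = 2^(d+2)" by (rule Suc)
  have "tsize (enc (Suc d) f off) + 1 = (tsize (enc d f off) + 1) + (tsize (enc d f (off + 2^d)) + 1)"
    by simp
  also have "\<dots> = 2^(Suc d + 2)" using a b by simp
  finally show ?case .
qed

lemma tsize_enc: "tsize (enc d f off) = 2^(d+2) - 1"
  using tsize_enc1[of d f off] by linarith

lemma P_La: "P La" unfolding P_def by (rule exI[of _ 0]) simp
lemma P_LbLa: "P (Lb La)" unfolding P_def by (rule exI[of _ 1]) simp
lemma P_LbLbLa: "P (Lb (Lb La))" unfolding P_def by (rule exI[of _ 1]) simp
lemma P_LcLaLa: "P (Lc La La)" unfolding P_def by (rule exI[of _ 1]) simp

lemma depth_enc: "depth (enc d f off) \<le> d + 2"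
  by (induction d arbitrary: off) (auto simp: bitleaf_def)

lemma P_enc: "s \<in> subtrees (enc d f off) \<Longrightarrow> P s"
proof (induction d arbitrary: off)
  case 0
  then show ?case
    by (cases "f off") (auto simp: bitleaf_def P_La P_LbLa P_LbLbLa P_LcLaLa)
next
  case (Suc d)
  show ?case
  proof (cases "s = enc (Suc d) f off")
    case True
    have "2^(Suc d + 2) \<le> tsize s + 1" using True tsize_enc1[of "Suc d" f off]
      by (simp del: enc.simps)
    moreover have "depth s \<le> 2 * (Suc d + 2)" using True depth_enc[of "Suc d" f off] by (simp del: enc.simps)
    ultimately show ?thesis unfolding P_def by blast
  next
    case False
    then show ?thesis using Suc by auto
  qed
qed

lemma tsize_chain: "tsize (chain j t) = j + tsize t"
  by (induction j) auto

lemma depth_chain: "depth (chain j t) = j + depth t"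
  by (induction j) auto

lemma sub_chain: "s \<in> subtrees (chain j t) \<Longrightarrow> (\<exists>i\<le>j. s = chain i t) \<or> s \<in> subtrees t"
  by (induction j) (auto simp: le_Suc_eq)

lemma chain_in: "i \<le> j \<Longrightarrow> chain i t \<in> subtrees (chain j t)"
proof (induction j)
  case 0 then show ?case by (simp add: self_sub)
next
  case (Suc j) then show ?case by (cases "i = Suc j") (auto simp: self_sub)
qed

lemma tsize_leafg: "tsize (leafg d i) = d + 2^(d+2) - 1"
  by (simp add: leafg_def tsize_chain tsize_enc)

lemma P_leafg: "s \<in> subtrees (leafg d i) \<Longrightarrow> P s"
proof -
  assume s: "s \<in> subtrees (leafg d i)"
  from sub_chain[OF s[unfolded leafg_def]] show ?thesis
  proof
    assume "\<exists>j\<le>d. s = chain j (enc d (bit i) 0)"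
    then obtain j where j: "j \<le> d" "s = chain j (enc d (bit i) 0)" by blast
    have "tsize s + 1 = j + 2^(d+2)" using j(2) tsize_chain[of j] tsize_enc1[of d "bit i" 0]
      by simp
    then have A: "2^(d+2) \<le> tsize s + 1" by simp
    have B1: "depth s = j + depth (enc d (bit i) 0)" using j(2) depth_chain by simp
    have B2: "j + depth (enc d (bit i) 0) \<le> d + (d + 2)"
      using j(1) depth_enc[of d "bit i" 0] by (rule add_mono)
    have "depth s \<le> 2*(d+2)" using B1 B2 by simp
    with A show ?thesis unfolding P_def by blast
  qed (rule P_enc)
qed

lemma tsize_skel: "tsize (skel d H off) + 1 = 2^H * (d + 2^(d+2))"
proof (induction H arbitrary: off)
  case 0
  have "(2::nat)^(d+2) \<ge> 1" by simp
  then show ?case by (simp add: tsize_leafg)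
next
  case (Suc H)
  have a: "tsize (skel d H off) + 1 = 2^H * (d + 2^(d+2))" by (rule Suc)
  have b: "tsize (skel d H (off + 2^H)) + 1 = 2^H * (d + 2^(d+2))" by (rule Suc)
  have "tsize (skel d (Suc H) off) + 1 = (tsize (skel d H off) + 1) + (tsize (skel d H (off + 2^H)) + 1)"
    by simp
  also have "\<dots> = 2^Suc H * (d + 2^(d+2))" using a b by simp
  finally show ?case .
qed

lemma depth_skel: "depth (skel d H off) \<le> H + 2*d + 2"
proof (induction H arbitrary: off)
  case 0
  then show ?case using depth_enc[of d "bit off" 0] by (simp add: leafg_def depth_chain)
next
  case (Suc H)
  then show ?case by (simp add: max_def)
qed

lemma P_skel: "s \<in> subtrees (skel d H off) \<Longrightarrow> P s"
proof (induction H arbitrary: off)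
  case 0 then show ?case by (simp add: P_leafg)
next
  case (Suc H)
  show ?case
  proof (cases "s = skel d (Suc H) off")
    case True
    have "2^(Suc H + d + 2) \<le> tsize s + 1"
    proof -
      have "(2::nat)^(Suc H + d + 2) = 2^Suc H * 2^(d+2)" by (simp add: power_add)
      also have "\<dots> \<le> 2^Suc H * (d + 2^(d+2))" by simp
      finally show ?thesis using True tsize_skel[of d "Suc H" off] by simp
    qed
    moreover have "depth s \<le> 2*(Suc H + d + 2)" using True depth_skel[of d "Suc H" off] by (simp del: skel.simps)
    ultimately show ?thesis unfolding P_def by blast
  next
    case False
    then have "s \<in> subtrees (skel d H off) \<or> s \<in> subtrees (skel d H (off + 2^H))"
      using Suc.prems by simp
    then show ?thesis using Suc.IH by blast
  qed
qed

lemma bitleaf_inj: "bitleaf a = bitleaf b \<Longrightarrow> a = b"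
  by (auto simp: bitleaf_def split: if_splits)

lemma enc_inj: "enc d f off = enc d g off \<Longrightarrow> k < 2^d \<Longrightarrow> f (off + k) = g (off + k)"
proof (induction d arbitrary: off k)
  case 0 then show ?case by (auto dest: bitleaf_inj)
next
  case (Suc d)
  from Suc.prems(1) have e1: "enc d f off = enc d g off" and e2: "enc d f (off + 2^d) = enc d g (off + 2^d)"
    by auto
  show ?case
  proof (cases "k < 2^d")
    case True then show ?thesis using Suc.IH[OF e1] by blast
  next
    case False
    then obtain k' where k': "k = 2^d + k'" "k' < 2^d" using Suc.prems(2)
      by (metis add_diff_inverse_nat add_less_cancel_left mult_2 power_Suc)
    then show ?thesis using Suc.IH[OF e2, of k'] by (simp add: add.assoc)
  qed
qed

lemma chain_inj: "chain j t = chain j' t' \<Longrightarrow> tsize t = tsize t' \<Longrightarrow> j = j' \<and> t = t'"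
proof -
  assume a: "chain j t = chain j' t'" and b: "tsize t = tsize t'"
  then have "j = j'" using tsize_chain[of j t] tsize_chain[of j' t'] by simp
  moreover have "chain j t = chain j t' \<Longrightarrow> t = t'" by (induction j) auto
  ultimately show ?thesis using a by simp
qed

lemma bits_inj:
  fixes i i' :: nat
  assumes "i < 2^m" "i' < 2^m" "\<forall>k<m. bit i k = bit i' k"
  shows "i = i'"
proof -
  have "bit i k = bit i' k" for k
  proof (cases "k < m")
    case True then show ?thesis using assms(3) by blast
  next
    case False
    then have "(2::nat)^m \<le> 2^k" by simp
    then have "i < 2^k" "i' < 2^k" using assms by linarith+
    then show ?thesis by (simp add: bit_iff_odd)
  qed
  then show ?thesis by (simp add: bit_eq_iff)
qed

lemma leaf_in: "i < 2^H \<Longrightarrow> leafg d (off + i) \<in> subtrees (skel d H off)"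
proof (induction H arbitrary: off i)
  case 0 then show ?case by (simp add: self_sub)
next
  case (Suc H)
  show ?case
  proof (cases "i < 2^H")
    case True then show ?thesis using Suc.IH[of i off] by simp
  next
    case False
    then obtain i' where "i = 2^H + i'" "i' < 2^H" using Suc.prems
      by (metis add_diff_inverse_nat add_less_cancel_left mult_2 power_Suc)
    then show ?thesis using Suc.IH[of i' "off + 2^H"] by (simp add: add.assoc)
  qed
qed

lemma dag_skel:
  assumes "H \<le> 2^d"
  shows "2^H * (d+1) \<le> dag_size (skel d H 0)"
proof -
  define S where "S = (\<lambda>(i,j). chain j (enc d (bit i) 0)) ` ({..<(2::nat)^H} \<times> {..d})"
  have sub: "S \<subseteq> subtrees (skel d H 0)"
  proof
    fix s assume "s \<in> S"
    then obtain i j :: nat where ij: "i < 2^H" "j \<le> d" "s = chain j (enc d (bit i) 0)"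
      unfolding S_def by auto
    have "leafg d i \<in> subtrees (skel d H 0)" using leaf_in[OF ij(1), of d 0] by simp
    moreover have "s \<in> subtrees (leafg d i)" unfolding leafg_def ij(3) by (rule chain_in[OF ij(2)])
    ultimately show "s \<in> subtrees (skel d H 0)" using sub_trans by blast
  qed
  have inj: "inj_on (\<lambda>(i,j). chain j (enc d (bit i) 0)) ({..<(2::nat)^H} \<times> {..d})"
  proof (rule inj_onI, clarify)
    fix i j i' j'
    assume i: "i < (2::nat)^H" "i' < (2::nat)^H"
      and e: "chain j (enc d (bit i) 0) = chain j' (enc d (bit i') 0)"
    from chain_inj[OF e] have jj: "j = j'" and ee: "enc d (bit i) 0 = enc d (bit i') 0"
      by (simp_all add: tsize_enc)
    have "(2::nat)^H \<le> 2^(2^d)" using assms by simp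
    then have "i < 2^(2^d)" "i' < 2^(2^d)" using i by linarith+
    moreover have "\<forall>k<2^d. bit i k = bit i' k" using enc_inj[OF ee] by simp
    ultimately have "i = i'" by (rule bits_inj)
    then show "i = i' \<and> j = j'" using jj by simp
  qed
  have "card S = 2^H * (d+1)" unfolding S_def using card_image[OF inj] by (simp add: card_cartesian_product)
  moreover have "card S \<le> dag_size (skel d H 0)" unfolding dag_size_def
    by (rule card_mono[OF fin_sub sub])
  ultimately show ?thesis by simp
qed


lemma P_real: "P s \<Longrightarrow> real (depth s) \<le> 2 * log 2 (real (tsize s) + 1)"
proof -
  assume "P s"
  then obtain e where e: "2^e \<le> tsize s + 1" "depth s \<le> 2*e" unfolding P_def by blast
  have "real e \<le> log 2 (real (tsize s + 1))" by (rule le_log2_of_power[OF e(1)])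
  then have "real e \<le> log 2 (real (tsize s) + 1)" by (simp add: add.commute)
  moreover have "real (depth s) \<le> 2 * real e" using e(2) by simp
  ultimately show ?thesis by linarith
qed

definition kk :: "nat \<Rightarrow> nat" where "kk n = floor_log n"
definition dd :: "nat \<Rightarrow> nat" where "dd n = Suc (floor_log (kk n))"
definition HH :: "nat \<Rightarrow> nat" where "HH n = kk n - (dd n + 3)"

lemma kk_big: "n \<ge> 256 \<Longrightarrow> kk n \<ge> 8"
  unfolding kk_def using floor_log_le_iff[of "2^8" n] floor_log_power[of 8] by simp

lemma HH_eq: assumes "n \<ge> 256" shows "HH n + dd n + 3 = kk n"
proof -
  have k: "kk n \<ge> 8" by (rule kk_big[OF assms])
  let ?f = "floor_log (kk n)"
  have "2 ^ ?f \<le> kk n" using floor_log_exp2_le k by simp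
  have "?f + 4 \<le> kk n"
  proof (cases "?f \<le> 4")
    case True then show ?thesis using k by simp
  next
    case False
    then have "?f + 4 \<le> 2 ^ ?f"
    proof -
      have "\<forall>m\<ge>4. m + 4 \<le> (2::nat)^m"
      proof (intro allI impI)
        fix m :: nat assume "4 \<le> m"
        then show "m + 4 \<le> 2^m"
        proof (induction m rule: dec_induct)
          case base then show ?case by simp
        next
          case (step m) then show ?case by simp
        qed
      qed
      then show ?thesis using False by simp
    qed
    then show ?thesis using \<open>2 ^ ?f \<le> kk n\<close> by linarith
  qed
  then show ?thesis unfolding HH_def dd_def by simp
qed

lemma HH_le: "HH n \<le> 2 ^ dd n"
proof -
  have "kk n < 2 * 2 ^ floor_log (kk n)" by (rule floor_log_exp2_gt)
  then show ?thesis unfolding HH_def dd_def by simp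
qed

definition tt :: "nat \<Rightarrow> rtree" where "tt n = skel (dd n) (HH n) 0"

lemma size_bounds: assumes "n \<ge> 256"
  shows "tsize (tt n) \<le> n" "n \<le> 8 * tsize (tt n)"
proof -
  let ?H = "HH n" and ?d = "dd n" and ?k = "kk n"
  have eq: "tsize (tt n) + 1 = 2^?H * (?d + 2^(?d+2))" unfolding tt_def by (rule tsize_skel)
  have hk: "?H + ?d + 3 = ?k" by (rule HH_eq[OF assms])
  have k1: "2 ^ ?k \<le> n" unfolding kk_def using floor_log_exp2_le assms by simp
  have k2: "n < 2 * 2 ^ ?k" unfolding kk_def by (rule floor_log_exp2_gt)
  have "?d < 2^?d" by (rule less_exp)
  moreover have "(2::nat)^?d \<le> 2^(?d+2)" by (rule power_increasing) simp_all
  ultimately have "?d \<le> 2^(?d+2)" by linarith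
  moreover have "(2::nat)^(?d+3) = 2 * 2^(?d+2)" by (simp add: power_add)
  ultimately have "?d + 2^(?d+2) \<le> 2^(?d+3)" by linarith
  then have "2^?H * (?d + 2^(?d+2)) \<le> 2^?H * 2^(?d+3)" by (rule mult_le_mono2)
  also have "\<dots> = 2^?k" unfolding hk[symmetric] by (simp add: power_add)
  finally show "tsize (tt n) \<le> n" using eq k1 by linarith
  have "(2::nat) ^ ?k = 2 * (2^?H * 2^(?d+2))" unfolding hk[symmetric] by (simp add: power_add)
  also have "\<dots> \<le> 2 * (2^?H * (?d + 2^(?d+2)))" by simp
  also have "\<dots> = 2 * (tsize (tt n) + 1)" using eq by simp
  finally have "2 ^ ?k \<le> 2 * (tsize (tt n) + 1)" .
  then have "n < 2 * (2 * (tsize (tt n) + 1))" by (rule less_le_trans[OF k2 mult_le_mono2])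
  then show "n \<le> 8 * tsize (tt n)" using assms by simp
qed

lemma dag_bound: assumes "n \<ge> 256"
  shows "real n * log 2 (log 2 (real n) - 1) / (32 * log 2 (real n)) \<le> real (dag_size (tt n))"
proof -
  let ?H = "HH n" and ?d = "dd n" and ?k = "kk n"
  define x where "x = log 2 (real n)"
  have hk: "?H + ?d + 3 = ?k" by (rule HH_eq[OF assms])
  have k8: "?k \<ge> 8" by (rule kk_big[OF assms])
  have k1: "2 ^ ?k \<le> n" unfolding kk_def using floor_log_exp2_le assms by simp
  have k2: "n < 2 * 2 ^ ?k" unfolding kk_def by (rule floor_log_exp2_gt)
  have xk: "real ?k \<le> x" unfolding x_def using le_log2_of_power[OF k1] .
  have xk2: "x < real ?k + 1" unfolding x_def using log2_of_power_less[of n "Suc ?k"] k2 assms by simp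
  have dk: "?k < 2 ^ ?d" unfolding dd_def using floor_log_exp2_gt[of ?k] by simp
  have dk2: "2 ^ ?d \<le> 2 * ?k" unfolding dd_def using floor_log_exp2_le[of ?k] k8 by simp
  have "n < 2 * 2^?k" by (rule k2)
  also have "(2::nat) * 2^?k = 2^?H * (2 * 2^3 * 2^?d)" unfolding hk[symmetric] by (simp add: power_add)
  also have "\<dots> \<le> 2^?H * (32 * ?k)" using dk2 by simp
  finally have "n \<le> 2^?H * (32 * ?k)" by simp
  then have "real n \<le> real (2^?H * (32 * ?k))" by (simp only: of_nat_le_iff)
  then have A: "real n \<le> 2^?H * (32 * real ?k)" by simp
  have B: "log 2 (real ?k) < real ?d" using log2_of_power_less[OF dk] k8 by simp
  have x8: "x \<ge> 8" using xk k8 by simp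
  have C: "log 2 (x - 1) \<le> log 2 (real ?k)" using xk2 x8 by simp
  have D: "real (2^?H * (?d+1)) \<le> real (dag_size (tt n))"
    unfolding tt_def using dag_skel[OF HH_le] by (simp only: of_nat_le_iff)
  have lpos: "0 \<le> log 2 (x - 1)" using x8 by simp
  have K0: "0 < real ?k" using k8 by simp
  have s1: "real n * log 2 (x - 1) / (32 * x) \<le> real n * log 2 (x - 1) / (32 * real ?k)"
  proof (rule divide_left_mono)
    show "32 * real ?k \<le> 32 * x" using xk by simp
    show "0 \<le> real n * log 2 (x - 1)" using lpos by simp
    show "0 < 32 * x * (32 * real ?k)" using K0 xk by simp
  qed
  have s2: "real n * log 2 (x - 1) \<le> 2^?H * (32 * real ?k) * log 2 (x - 1)"
    by (rule mult_right_mono[OF A lpos])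
  have "real n * log 2 (x - 1) / (32 * x) \<le> 2^?H * (32 * real ?k) * log 2 (x - 1) / (32 * real ?k)"
    using s1 divide_right_mono[OF s2, of "32 * real ?k"] K0 by linarith
  also have "\<dots> = 2^?H * log 2 (x - 1)" using k8 by simp
  also have "\<dots> \<le> 2^?H * (real ?d + 1)" using B C by simp
  also have "\<dots> = real (2^?H * (?d+1))" by (simp add: algebra_simps)
  finally show ?thesis using D unfolding x_def by linarith
qed

theorem mainTheorem8:
  shows "\<exists>(t :: nat \<Rightarrow> rtree) (C :: real). C > 0 \<and>
    (\<lambda>n. real (tsize (t n))) \<in> \<Theta>(\<lambda>n. real n) \<and>
    (\<forall>n \<ge> 1. \<forall>s \<in> subtrees (t n).
        real (depth s) \<le> C * log 2 (real (tsize s) + 1)) \<and>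
    (\<lambda>n. real (dag_size (t n))) \<in> \<Omega>(\<lambda>n. real n * ln (ln (real n)) / ln (real n))"
proof (intro exI[of _ tt] exI[of _ 2] conjI)
  show "(2::real) > 0" by simp
  show "(\<lambda>n. real (tsize (tt n))) \<in> \<Theta>(\<lambda>n. real n)"
  proof (rule bigthetaI'[of "1/8" 1])
    show "eventually (\<lambda>n. 1/8 * norm (real n) \<le> norm (real (tsize (tt n))) \<and>
        norm (real (tsize (tt n))) \<le> 1 * norm (real n)) at_top"
      using eventually_ge_at_top[of "256::nat"]
    proof eventually_elim
      case (elim n)
      from size_bounds[OF elim] show ?case by simp
    qed
  qed simp_all
  show "\<forall>n\<ge>1. \<forall>s\<in>subtrees (tt n). real (depth s) \<le> 2 * log 2 (real (tsize s) + 1)"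
    unfolding tt_def using P_skel P_real by blast
  let ?g = "\<lambda>n::nat. real n * log 2 (log 2 (real n) - 1) / (32 * log 2 (real n))"
  have 1: "(\<lambda>n::nat. real n * ln (ln (real n)) / ln (real n)) \<in> O(?g)" by real_asymp
  have 2: "?g \<in> O(\<lambda>n. real (dag_size (tt n)))"
  proof (rule bigoI[of _ 1])
    show "eventually (\<lambda>n. norm (?g n) \<le> 1 * norm (real (dag_size (tt n)))) at_top"
      using eventually_ge_at_top[of "256::nat"]
    proof eventually_elim
      case (elim n)
      have x8: "log 2 (real n) \<ge> 8"
        using le_log2_of_power[of 8 n] elim by simp
      then have "?g n \<ge> 0" by simp
      then show ?case using dag_bound[OF elim] by simp
    qed
  qed
  show "(\<lambda>n. real (dag_size (tt n))) \<in> \<Omega>(\<lambda>n. real n * ln (ln (real n)) / ln (real n))"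
    unfolding bigomega_iff_bigo using landau_o.big_trans[OF 1 2] .
qed
end
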